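(* Let $G=(V,E)$ be a simple connected undirected graph and let $S=\{v_1,\dots,v_p\}$ be the output of Algorithm Stage-One on $G$. If $S$ is an independent set of $G$ and no vertex of $V\setminus S$ is adjacent to two or more vertices of $S$, then $S$ is a minimum dominating set of $G$, i.e. $|S|=\gamma(G)$.
   Context: A set $D\subseteq V$ is dominating if every vertex of $V\setminus D$ has a neighbor in $D$; $\gamma(G)$ is the minimum cardinality of a dominating set. An independent set is a set of pairwise non-adjacent vertices. For $v\in V$, $N(v)=\{u\in V:(u,v)\in E\}$; for $U\subseteq V$, $N(U)=\{v\in V\setminus U: v \text{ has a neighbor in } U\}$. Algorithm Stage-One: set $S_0=\emptyset$ and $h=0$. While $S_h$ is not a dominating set of $G$: increase $h$ by one; for each $v\in V\setminus S_{h-1}$ its active degree is $|N(v)\setminus (S_{h-1}\cup N(S_{h-1}))|$; if the maximum active degree over $V\setminus S_{h-1}$ is positive, let $v_h$ be any vertex of $V\setminus S_{h-1}$ of maximum active degree, otherwise let $v_h$ be any vertex of $V\setminus(S_{h-1}\cup N(S_{h-1}))$; set $S_h=S_{h-1}\cup\{v_h\}$. The output is $S=S_p$. *)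

theory Defs
  imports Main
begin

definition simple_graph :: "'a set \<Rightarrow> ('a \<Rightarrow> 'a \<Rightarrow> bool) \<Rightarrow> bool" where
  "simple_graph V E \<longleftrightarrow> finite V \<and> (\<forall>x y. E x y \<longrightarrow> x \<in> V \<and> y \<in> V)
     \<and> (\<forall>x y. E x y \<longrightarrow> E y x) \<and> (\<forall>x. \<not> E x x)"

definition connected_graph :: "'a set \<Rightarrow> ('a \<Rightarrow> 'a \<Rightarrow> bool) \<Rightarrow> bool" where
  "connected_graph V E \<longleftrightarrow> V \<noteq> {} \<and>
     (\<forall>u\<in>V. \<forall>v\<in>V. (\<lambda>x y. E x y \<and> x \<in> V \<and> y \<in> V)\<^sup>*\<^sup>* u v)"

definition nbhd :: "'a set \<Rightarrow> ('a \<Rightarrow> 'a \<Rightarrow> bool) \<Rightarrow> 'a \<Rightarrow> 'a set" where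
  "nbhd V E v = {u \<in> V. E u v}"

definition nbhd_set :: "'a set \<Rightarrow> ('a \<Rightarrow> 'a \<Rightarrow> bool) \<Rightarrow> 'a set \<Rightarrow> 'a set" where
  "nbhd_set V E U = {v \<in> V - U. \<exists>u\<in>U. E v u}"

definition dominating :: "'a set \<Rightarrow> ('a \<Rightarrow> 'a \<Rightarrow> bool) \<Rightarrow> 'a set \<Rightarrow> bool" where
  "dominating V E D \<longleftrightarrow> D \<subseteq> V \<and> (\<forall>v\<in>V - D. \<exists>u\<in>D. E v u)"

definition domination_number :: "'a set \<Rightarrow> ('a \<Rightarrow> 'a \<Rightarrow> bool) \<Rightarrow> nat" where
  "domination_number V E = Min (card ` {D. dominating V E D})"

definition independent :: "('a \<Rightarrow> 'a \<Rightarrow> bool) \<Rightarrow> 'a set \<Rightarrow> bool" where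
  "independent E S \<longleftrightarrow> (\<forall>u\<in>S. \<forall>v\<in>S. \<not> E u v)"

definition active_deg :: "'a set \<Rightarrow> ('a \<Rightarrow> 'a \<Rightarrow> bool) \<Rightarrow> 'a set \<Rightarrow> 'a \<Rightarrow> nat" where
  "active_deg V E S v = card (nbhd V E v - (S \<union> nbhd_set V E S))"

definition stage_one_choice :: "'a set \<Rightarrow> ('a \<Rightarrow> 'a \<Rightarrow> bool) \<Rightarrow> 'a set \<Rightarrow> 'a \<Rightarrow> bool" where
  "stage_one_choice V E S v \<longleftrightarrow> v \<in> V - S \<and>
     (let m = Max (active_deg V E S ` (V - S)) in
       if m > 0 then active_deg V E S v = m
       else v \<in> V - (S \<union> nbhd_set V E S))"

text \<open>vs = [v_1, ..., v_p] is a possible run of Algorithm Stage-One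
(with any tie-breaking); its output is set vs. S_h = set (take h vs).\<close>
definition stage_one_run :: "'a set \<Rightarrow> ('a \<Rightarrow> 'a \<Rightarrow> bool) \<Rightarrow> 'a list \<Rightarrow> bool" where
  "stage_one_run V E vs \<longleftrightarrow>
     (\<forall>h < length vs. \<not> dominating V E (set (take h vs)) \<and>
                       stage_one_choice V E (set (take h vs)) (vs ! h))
     \<and> dominating V E (set vs)"

end

theory Submission
  imports Defs
begin

theorem proposition2:
  fixes V :: "'a set" and E :: "'a \<Rightarrow> 'a \<Rightarrow> bool" and vs :: "'a list"
  assumes "simple_graph V E"
    and "connected_graph V E"
    and "stage_one_run V E vs"
    and "independent E (set vs)"
    and "\<forall>v\<in>V - set vs. card {u \<in> set vs. E v u} \<le> 1"
  shows "dominating V E (set vs) \<and> card (set vs) = domination_number V E"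
proof -
  let ?S = "set vs"
  have domS: "dominating V E ?S" using assms(3) unfolding stage_one_run_def by blast
  have finV: "finite V" and sym: "\<And>x y. E x y \<Longrightarrow> E y x"
    and inV: "\<And>x y. E x y \<Longrightarrow> x \<in> V \<and> y \<in> V"
    using assms(1) unfolding simple_graph_def by blast+
  have ind: "\<And>u v. u \<in> ?S \<Longrightarrow> v \<in> ?S \<Longrightarrow> \<not> E u v"
    using assms(4) unfolding independent_def by blast
  have lower: "card ?S \<le> card D" if D: "dominating V E D" for D
  proof -
    have DV: "D \<subseteq> V" using D unfolding dominating_def by blast
    have SV: "?S \<subseteq> V" using domS unfolding dominating_def by blast
    have ex: "\<forall>s\<in>?S. \<exists>d\<in>D. d = s \<or> E s d"
    proof
      fix s assume s: "s \<in> ?S"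
      show "\<exists>d\<in>D. d = s \<or> E s d"
      proof (cases "s \<in> D")
        case True then show ?thesis by blast
      next
        case False
        then have "s \<in> V - D" using s SV by blast
        then show ?thesis using D unfolding dominating_def by blast
      qed
    qed
    then obtain f where f: "\<And>s. s \<in> ?S \<Longrightarrow> f s \<in> D \<and> (f s = s \<or> E s (f s))"
      by metis
    have inj: "inj_on f ?S"
    proof (rule inj_onI)
      fix s t assume s: "s \<in> ?S" and t: "t \<in> ?S" and eq: "f s = f t"
      show "s = t"
      proof (rule ccontr)
        assume ne: "s \<noteq> t"
        have fs: "f s = s \<or> E s (f s)" and ft: "f t = t \<or> E t (f t)" using f s t by auto
        show False
        proof (cases "f s \<in> ?S")
          case True
          then show False using fs ft eq ne ind s t sym by metis
        next
          case False
          then have es: "E s (f s)" and et: "E t (f s)" using fs ft eq s t by auto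
          have "f s \<in> V - ?S" using False inV es by blast
          then have c: "card {u \<in> ?S. E (f s) u} \<le> 1" using assms(5) by blast
          have "{s, t} \<subseteq> {u \<in> ?S. E (f s) u}" using s t es et sym by blast
          then have "card {s, t} \<le> card {u \<in> ?S. E (f s) u}"
            by (intro card_mono) auto
          then show False using c ne by simp
        qed
      qed
    qed
    have "finite D" using DV finV finite_subset by blast
    then show ?thesis using card_inj_on_le[OF inj] f by blast
  qed
  have fin: "finite (card ` {D. dominating V E D})"
  proof -
    have "{D. dominating V E D} \<subseteq> Pow V" unfolding dominating_def by blast
    then show ?thesis using finV by (meson finite_Pow_iff finite_imageI finite_subset)
  qed
  have "domination_number V E = card ?S"
    unfolding domination_number_def
  proof (rule Min_eqI[OF fin])
    show "\<And>y. y \<in> card ` {D. dominating V E D} \<Longrightarrow> card ?S \<le> y" using lower by blast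
    show "card ?S \<in> card ` {D. dominating V E D}" using domS by blast
  qed
  then show ?thesis using domS by simp
qed

end
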